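(* Let $(S,U,A,\{R(a)\}_{a\in\mathcal{A}})$ be a random tuple, where $S\in\mathcal{S}$ is an observed feature, $U\in\mathcal{U}$ is an unobserved feature, $A$ is an action taking values in a finite set $\mathcal{A}$, and $R(a)$ (integrable) is the potential reward had action $a$ been taken; the observed reward is $R=\sum_{a\in\mathcal{A}}R(a)\mathbb{I}(A=a)$. Suppose $A$ is generated by a behavior policy $\pi^b(\cdot\mid S,U)$ that may depend on both $S$ and $U$. Let $\pi^\ast$ be the standard optimal policy, $\pi^\ast(a^\ast\mid s)=1$ where $a^\ast=\operatorname{argmax}_{a\in\mathcal{A}}\mathbb{E}[R(a)\mid S=s]$ (assumed unique for every $s$), and let $\nu^\ast$ be the super-policy, $\nu^\ast(a^\ast\mid s,a')=1$ where $a^\ast=\operatorname{argmax}_{a\in\mathcal{A}}\mathbb{E}[R(a)\mid S=s,A=a']$, for all $(s,a')\in\mathcal{S}\times\mathcal{A}$. Then $$\mathcal{V}(\nu^\ast)\ \ge\ \max\{\mathcal{V}(\pi^b),\mathcal{V}(\pi^\ast)\}.$$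
   Context: The super-policy class is $\Omega=\{\nu:\mathcal{S}\times\mathcal{A}\to\mathcal{P}(\mathcal{A})\}$, where $\mathcal{P}(\mathcal{A})$ is the set of probability distributions on $\mathcal{A}$ and the second argument of $\nu$ is the action $A$ recommended by the behavior policy. For $\nu\in\Omega$, its value is $\mathcal{V}(\nu)=\sum_{a\in\mathcal{A}}\mathbb{E}[R(a)\nu(a\mid S,A)]$. For a policy $\pi:\mathcal{S}\to\mathcal{P}(\mathcal{A})$, $\mathcal{V}(\pi)=\sum_{a}\mathbb{E}[R(a)\pi(a\mid S)]$. The value of the behavior policy is $\mathcal{V}(\pi^b)=\mathbb{E}[R]=\sum_a\mathbb{E}[R(a)\mathbb{I}(A=a)]$. *)

theory Defs
  imports "HOL-Probability.Probability"
begin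

definition argmax_act :: "('a::finite \<Rightarrow> real) \<Rightarrow> 'a" where
  "argmax_act f = (THE a. \<forall>b. f b \<le> f a)"

text \<open>Value of a super-policy nu, where nu s a' a is the probability of action a
  given feature s and recommended (behaviour) action a':
  V(nu) = sum_a E[R(a) nu(a | S, A)].\<close>
definition super_value ::
  "'w measure \<Rightarrow> ('w \<Rightarrow> 's) \<Rightarrow> ('w \<Rightarrow> 'a::finite) \<Rightarrow> ('a \<Rightarrow> 'w \<Rightarrow> real)
     \<Rightarrow> ('s \<Rightarrow> 'a \<Rightarrow> 'a \<Rightarrow> real) \<Rightarrow> real" where
  "super_value M S A R nu = (\<Sum>a\<in>UNIV. \<integral>w. R a w * nu (S w) (A w) a \<partial>M)"

definition policy_value ::
  "'w measure \<Rightarrow> ('w \<Rightarrow> 's) \<Rightarrow> ('a::finite \<Rightarrow> 'w \<Rightarrow> real)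
     \<Rightarrow> ('s \<Rightarrow> 'a \<Rightarrow> real) \<Rightarrow> real" where
  "policy_value M S R p = (\<Sum>a\<in>UNIV. \<integral>w. R a w * p (S w) a \<partial>M)"

definition behavior_value ::
  "'w measure \<Rightarrow> ('w \<Rightarrow> 'a::finite) \<Rightarrow> ('a \<Rightarrow> 'w \<Rightarrow> real) \<Rightarrow> real" where
  "behavior_value M A R = (\<Sum>a\<in>UNIV. \<integral>w. R a w * indicator {a} (A w) \<partial>M)"

text \<open>Standard optimal policy from Q1 s a = E[R(a) | S = s].\<close>
definition pi_star :: "('s \<Rightarrow> 'a::finite \<Rightarrow> real) \<Rightarrow> 's \<Rightarrow> 'a \<Rightarrow> real" where
  "pi_star Q1 s a = (if a = argmax_act (Q1 s) then 1 else 0)"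

text \<open>Optimal super-policy from Q2 (s,a') a = E[R(a) | S = s, A = a'].\<close>
definition nu_star :: "('s \<times> 'a \<Rightarrow> 'a::finite \<Rightarrow> real) \<Rightarrow> 's \<Rightarrow> 'a \<Rightarrow> 'a \<Rightarrow> real" where
  "nu_star Q2 s a' a = (if a = argmax_act (Q2 (s, a')) then 1 else 0)"

end

theory Submission
  imports Defs
begin

lemma argmax_act_prop:
  assumes "\<exists>!a. \<forall>b. f b \<le> f a"
  shows "\<forall>b. f b \<le> f (argmax_act f)"
  using theI'[OF assms] unfolding argmax_act_def by blast

lemma argmax_act_eq:
  assumes "\<exists>!a. \<forall>b. f b \<le> f a"
  shows "argmax_act f = a \<longleftrightarrow> (\<forall>b. f b \<le> f a)"
  using argmax_act_prop[OF assms] assms by (metis)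

lemma value_eq_bound:
  fixes M :: "'w measure" and MS :: "'s measure"
    and S :: "'w \<Rightarrow> 's" and A :: "'w \<Rightarrow> 'a::finite"
    and R :: "'a \<Rightarrow> 'w \<Rightarrow> real"
    and Q2 :: "'s \<times> 'a \<Rightarrow> 'a \<Rightarrow> real"
    and f :: "'s \<times> 'a \<Rightarrow> 'a"
  assumes S_meas: "S \<in> measurable M MS"
    and A_meas: "A \<in> measurable M (count_space UNIV)"
    and R_int: "\<And>a. integrable M (R a)"
    and Q2_int: "\<And>a. integrable M (\<lambda>w. Q2 (S w, A w) a)"
    and Q2_ce: "\<And>a B. B \<in> sets (MS \<Otimes>\<^sub>M count_space UNIV) \<Longrightarrow>
        (\<integral>w. indicator B (S w, A w) * R a w \<partial>M)
          = (\<integral>w. indicator B (S w, A w) * Q2 (S w, A w) a \<partial>M)"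
    and f_meas: "f \<in> measurable (MS \<Otimes>\<^sub>M count_space UNIV) (count_space UNIV)"
    and g_meas: "g \<in> measurable (MS \<Otimes>\<^sub>M count_space UNIV) (count_space UNIV)"
    and g_max: "\<And>x b. Q2 x b \<le> Q2 x (g x)"
  shows "(\<Sum>a\<in>UNIV. \<integral>w. (if f (S w, A w) = a then 1 else 0) * R a w \<partial>M)
       \<le> (\<Sum>a\<in>UNIV. \<integral>w. (if g (S w, A w) = a then 1 else 0) * R a w \<partial>M)"
proof -
  let ?N = "MS \<Otimes>\<^sub>M count_space UNIV"
  have SA: "(\<lambda>w. (S w, A w)) \<in> measurable M ?N"
    using S_meas A_meas by (rule measurable_Pair)
  have gen: "(\<Sum>a\<in>UNIV. \<integral>w. (if h (S w, A w) = a then 1 else 0) * R a w \<partial>M)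
      = (\<integral>w. Q2 (S w, A w) (h (S w, A w)) \<partial>M) \<and> integrable M (\<lambda>w. Q2 (S w, A w) (h (S w, A w)))"
    if h_meas: "h \<in> measurable ?N (count_space UNIV)" for h :: "'s \<times> 'a \<Rightarrow> 'a"
  proof -
    define D where "D a = h -` {a} \<inter> space ?N" for a
    have D_sets: "D a \<in> sets ?N" for a
      unfolding D_def using h_meas by (rule measurable_sets) simp
    have hD: "(if h (S w, A w) = a then 1 else 0) = (indicator (D a) (S w, A w) :: real)"
      if "w \<in> space M" for w a
      using measurable_space[OF SA that] by (auto simp: D_def indicator_def)
    have int_i: "integrable M (\<lambda>w. indicator (D a) (S w, A w) * Q2 (S w, A w) a)" for a
    proof -
      have "integrable M (\<lambda>w. Q2 (S w, A w) a * indicator ((\<lambda>w. (S w, A w)) -` D a \<inter> space M) w)"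
        by (rule integrable_real_mult_indicator) (use SA D_sets Q2_int in auto)
      then show ?thesis
        by (rule Bochner_Integration.integrable_cong[OF refl, THEN iffD1, rotated]) (auto simp: indicator_def)
    qed
    have pt: "(\<Sum>a\<in>UNIV. indicator (D a) (S w, A w) * Q2 (S w, A w) a) = Q2 (S w, A w) (h (S w, A w))"
      if "w \<in> space M" for w
    proof -
      have "(\<Sum>a\<in>UNIV. indicator (D a) (S w, A w) * Q2 (S w, A w) a)
          = (\<Sum>a\<in>UNIV. if h (S w, A w) = a then Q2 (S w, A w) a else 0)"
        by (rule sum.cong) (auto simp: hD[OF that, symmetric])
      also have "\<dots> = Q2 (S w, A w) (h (S w, A w))" by simp
      finally show ?thesis .
    qed
    have "(\<Sum>a\<in>UNIV. \<integral>w. (if h (S w, A w) = a then 1 else 0) * R a w \<partial>M)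
        = (\<Sum>a\<in>UNIV. \<integral>w. indicator (D a) (S w, A w) * R a w \<partial>M)"
      by (rule sum.cong[OF refl], rule Bochner_Integration.integral_cong[OF refl]) (simp add: hD)
    also have "\<dots> = (\<Sum>a\<in>UNIV. \<integral>w. indicator (D a) (S w, A w) * Q2 (S w, A w) a \<partial>M)"
      by (intro sum.cong refl Q2_ce D_sets)
    also have "\<dots> = (\<integral>w. (\<Sum>a\<in>UNIV. indicator (D a) (S w, A w) * Q2 (S w, A w) a) \<partial>M)"
      by (rule Bochner_Integration.integral_sum[symmetric]) (rule int_i)
    also have "\<dots> = (\<integral>w. Q2 (S w, A w) (h (S w, A w)) \<partial>M)"
      by (rule Bochner_Integration.integral_cong[OF refl]) (rule pt)
    finally have e: "(\<Sum>a\<in>UNIV. \<integral>w. (if h (S w, A w) = a then 1 else 0) * R a w \<partial>M)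
        = (\<integral>w. Q2 (S w, A w) (h (S w, A w)) \<partial>M)" .
    have "integrable M (\<lambda>w. (\<Sum>a\<in>UNIV. indicator (D a) (S w, A w) * Q2 (S w, A w) a))"
      by (rule Bochner_Integration.integrable_sum) (rule int_i)
    then have "integrable M (\<lambda>w. Q2 (S w, A w) (h (S w, A w)))"
      by (rule Bochner_Integration.integrable_cong[OF refl, THEN iffD1, rotated]) (rule pt)
    with e show ?thesis by blast
  qed
  have "(\<integral>w. Q2 (S w, A w) (f (S w, A w)) \<partial>M) \<le> (\<integral>w. Q2 (S w, A w) (g (S w, A w)) \<partial>M)"
    using gen[OF f_meas] gen[OF g_meas] g_max by (intro integral_mono) auto
  then show ?thesis using gen[OF f_meas] gen[OF g_meas] by simp
qed

lemma argmax_meas: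
  fixes F :: "'x \<Rightarrow> 'a::finite \<Rightarrow> real"
  assumes meas: "\<And>a. (\<lambda>x. F x a) \<in> borel_measurable N"
    and uniq: "\<And>x. \<exists>!a. \<forall>b. F x b \<le> F x a"
  shows "(\<lambda>x. argmax_act (F x)) \<in> measurable N (count_space UNIV)"
proof (subst measurable_count_space_eq2_countable, intro conjI ballI)
  fix a :: 'a
  have "(\<lambda>x. argmax_act (F x)) -` {a} \<inter> space N = (\<Inter>b. {x \<in> space N. F x b \<le> F x a})"
    using argmax_act_eq[OF uniq] by auto
  also have "\<dots> \<in> sets N"
    by (intro sets.finite_INT) (auto intro!: borel_measurable_le meas)
  finally show "(\<lambda>x. argmax_act (F x)) -` {a} \<inter> space N \<in> sets N" .
qed auto

theorem lemma1:
  fixes M :: "'w measure" and MS :: "'s measure" and MU :: "'u measure"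
    and S :: "'w \<Rightarrow> 's" and U :: "'w \<Rightarrow> 'u" and A :: "'w \<Rightarrow> 'a::finite"
    and R :: "'a \<Rightarrow> 'w \<Rightarrow> real"
    and Q1 :: "'s \<Rightarrow> 'a \<Rightarrow> real" and Q2 :: "'s \<times> 'a \<Rightarrow> 'a \<Rightarrow> real"
  assumes "prob_space M"
    and S_meas: "S \<in> measurable M MS"
    and U_meas: "U \<in> measurable M MU"
    and A_meas: "A \<in> measurable M (count_space UNIV)"
    and R_int: "\<And>a. integrable M (R a)"
    \<comment> \<open>Q1 (S w) a is (a version of) E[R(a) | S]\<close>
    and Q1_meas: "\<And>a. (\<lambda>s. Q1 s a) \<in> borel_measurable MS"
    and Q1_int: "\<And>a. integrable M (\<lambda>w. Q1 (S w) a)"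
    and Q1_ce: "\<And>a B. B \<in> sets MS \<Longrightarrow>
        (\<integral>w. indicator B (S w) * R a w \<partial>M) = (\<integral>w. indicator B (S w) * Q1 (S w) a \<partial>M)"
    \<comment> \<open>Q2 (S w, A w) a is (a version of) E[R(a) | S, A]\<close>
    and Q2_meas: "\<And>a. (\<lambda>x. Q2 x a) \<in> borel_measurable (MS \<Otimes>\<^sub>M count_space UNIV)"
    and Q2_int: "\<And>a. integrable M (\<lambda>w. Q2 (S w, A w) a)"
    and Q2_ce: "\<And>a B. B \<in> sets (MS \<Otimes>\<^sub>M count_space UNIV) \<Longrightarrow>
        (\<integral>w. indicator B (S w, A w) * R a w \<partial>M)
          = (\<integral>w. indicator B (S w, A w) * Q2 (S w, A w) a \<partial>M)"
    \<comment> \<open>uniqueness of the argmax\<close>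
    and Q1_uniq: "\<And>s. \<exists>!a. \<forall>b. Q1 s b \<le> Q1 s a"
    and Q2_uniq: "\<And>s a'. \<exists>!a. \<forall>b. Q2 (s, a') b \<le> Q2 (s, a') a"
  shows "super_value M S A R (nu_star Q2)
           \<ge> max (behavior_value M A R) (policy_value M S R (pi_star Q1))"
proof -
  let ?N = "MS \<Otimes>\<^sub>M count_space UNIV"
  have Q2_uniq': "\<exists>!a. \<forall>b. Q2 x b \<le> Q2 x a" for x
    using Q2_uniq[of "fst x" "snd x"] by simp
  have g_meas: "(\<lambda>x. argmax_act (Q2 x)) \<in> measurable ?N (count_space UNIV)"
    by (rule argmax_meas[OF Q2_meas Q2_uniq'])
  have g_max: "\<And>x b. Q2 x b \<le> Q2 x (argmax_act (Q2 x))"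
    using argmax_act_prop Q2_uniq' by blast
  have h1: "(\<lambda>s. argmax_act (Q1 s)) \<in> measurable MS (count_space UNIV)"
    by (rule argmax_meas[OF Q1_meas Q1_uniq])
  have f2_meas: "(\<lambda>x. argmax_act (Q1 (fst x))) \<in> measurable ?N (count_space UNIV)"
    using measurable_compose[OF measurable_fst h1, of "count_space UNIV"] by (simp add: comp_def)
  have f1_meas: "(snd :: 's \<times> 'a \<Rightarrow> 'a) \<in> measurable ?N (count_space UNIV)"
    by (rule measurable_snd)
  have sv: "super_value M S A R (nu_star Q2)
      = (\<Sum>a\<in>UNIV. \<integral>w. (if argmax_act (Q2 (S w, A w)) = a then 1 else 0) * R a w \<partial>M)"
    unfolding super_value_def nu_star_def
    by (rule sum.cong[OF refl], rule Bochner_Integration.integral_cong[OF refl]) auto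
  have bv: "behavior_value M A R
      = (\<Sum>a\<in>UNIV. \<integral>w. (if snd (S w, A w) = a then 1 else 0) * R a w \<partial>M)"
    unfolding behavior_value_def
    by (rule sum.cong[OF refl], rule Bochner_Integration.integral_cong[OF refl]) (auto simp: indicator_def)
  have pv: "policy_value M S R (pi_star Q1)
      = (\<Sum>a\<in>UNIV. \<integral>w. (if argmax_act (Q1 (fst (S w, A w))) = a then 1 else 0) * R a w \<partial>M)"
    unfolding policy_value_def pi_star_def
    by (rule sum.cong[OF refl], rule Bochner_Integration.integral_cong[OF refl]) auto
  show ?thesis
    unfolding sv bv pv
    using value_eq_bound[OF S_meas A_meas R_int Q2_int Q2_ce f1_meas g_meas g_max]
      value_eq_bound[OF S_meas A_meas R_int Q2_int Q2_ce f2_meas g_meas g_max] by simp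
qed

end
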